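(* Let $\varPhi$ be a family of open intervals contained in $[0,1]$. Suppose there is $C>0$ such that for every interval $(a,b)\subset[0,1]$ there exists $\varDelta(a,b)\in\varPhi$ with (a) $\frac{a+b}{2}\in\varDelta(a,b)$, (b) $\varDelta(a,b)\subset(a,b)$, (c) $\frac{b-a}{|\varDelta(a,b)|}\le C$. Then $\varPhi$ is faithful for packing dimension calculation, i.e. $\dim_{P}(E,\varPhi)=\dim_{P(\mathit{unc})}(E)$ for every $E\subset[0,1]$.
   Context: Work in $\mathbb R$ with the usual metric; $|A|$ is the length (diameter). An uncentered $\varepsilon$-packing of $E$ is a finite or countable family of pairwise disjoint open intervals $E_i$ with $|E_i|\le\varepsilon$ and $E_i\cap E\ne\varnothing$. For $\alpha\ge0$: $\mathcal P^\alpha_{\varepsilon(\mathit{unc})}(E)=\sup\sum_i|E_i|^\alpha$ over uncentered $\varepsilon$-packings; $\mathcal P^\alpha_{0(\mathit{unc})}=\lim_{\varepsilon\to0}\mathcal P^\alpha_{\varepsilon(\mathit{unc})}$; $\mathcal P^\alpha_{(\mathit{unc})}(E)=\inf\{\sum_j\mathcal P^\alpha_{0(\mathit{unc})}(E_j):E\subset\bigcup_jE_j\}$ over countable covers; $\dim_{P(\mathit{unc})}(E)=\inf\{\alpha:\mathcal P^\alpha_{(\mathit{unc})}(E)=0\}$. $\dim_P(E,\varPhi)$ is defined identically but using only uncentered packings by intervals from $\varPhi$ (empty packing gives $0$). *)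

theory Defs
  imports "HOL-Analysis.Analysis"
begin

definition open_intervals :: "real set set" where
  "open_intervals = {{a<..<b} | a b. a < b}"

definition is_packing :: "real set set \<Rightarrow> real \<Rightarrow> real set \<Rightarrow> real set set \<Rightarrow> bool" where
  "is_packing Phi eps E P \<longleftrightarrow> countable P \<and> P \<subseteq> Phi \<inter> open_intervals \<and> disjoint P \<and>
     (\<forall>I\<in>P. diameter I \<le> eps \<and> I \<inter> E \<noteq> {})"

definition pack_sum :: "real \<Rightarrow> real set set \<Rightarrow> ennreal" where
  "pack_sum \<alpha> P = (SUP F\<in>{F. finite F \<and> F \<subseteq> P}. ennreal (\<Sum>I\<in>F. diameter I powr \<alpha>))"

definition P_eps :: "real set set \<Rightarrow> real \<Rightarrow> real \<Rightarrow> real set \<Rightarrow> ennreal" where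
  "P_eps Phi \<alpha> eps E = (SUP P\<in>{P. is_packing Phi eps E P}. pack_sum \<alpha> P)"

text \<open>P_eps is monotone in eps, so the limit eps -> 0 is the infimum over eps > 0.\<close>
definition P_zero :: "real set set \<Rightarrow> real \<Rightarrow> real set \<Rightarrow> ennreal" where
  "P_zero Phi \<alpha> E = (INF eps\<in>{0<..}. P_eps Phi \<alpha> eps E)"

definition P_meas :: "real set set \<Rightarrow> real \<Rightarrow> real set \<Rightarrow> ennreal" where
  "P_meas Phi \<alpha> E = (INF A\<in>{A :: nat \<Rightarrow> real set. E \<subseteq> (\<Union>j. A j)}. (\<Sum>j. P_zero Phi \<alpha> (A j)))"

definition dim_P :: "real set set \<Rightarrow> real set \<Rightarrow> real" where
  "dim_P Phi E = Inf {\<alpha>. 0 \<le> \<alpha> \<and> P_meas Phi \<alpha> E = 0}"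

definition dim_P_unc :: "real set \<Rightarrow> real" where
  "dim_P_unc E = dim_P open_intervals E"

end

theory Submission
  imports Defs
begin

lemma select_sep:
  fixes lo hi x :: "'a \<Rightarrow> real" and L :: real
  assumes "finite S"
    and "\<And>i. i \<in> S \<Longrightarrow> lo i < x i \<and> x i < hi i \<and> L < hi i - lo i"
    and "\<And>i j. i \<in> S \<Longrightarrow> j \<in> S \<Longrightarrow> i \<noteq> j \<Longrightarrow> hi i \<le> lo j \<or> hi j \<le> lo i"
  shows "\<exists>Y\<subseteq>S. card S \<le> 2 * card Y \<and> (\<forall>i\<in>Y. \<forall>j\<in>Y. i \<noteq> j \<longrightarrow> L \<le> \<bar>x i - x j\<bar>)"
  using assms
proof (induction "card S" arbitrary: S rule: less_induct)
  case less
  show ?case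
  proof (cases "S = {}")
    case True then show ?thesis by auto
  next
    case False
    have "Min (lo ` S) \<in> lo ` S" using less.prems(1) False by (intro Min_in) auto
    then obtain i0 where i0a: "i0 \<in> S" "Min (lo ` S) = lo i0"
      unfolding image_iff by blast
    have i0le: "\<forall>j\<in>S. lo i0 \<le> lo j"
    proof -
      have "\<forall>j\<in>S. Min (lo ` S) \<le> lo j" using less.prems(1) by simp
      then show ?thesis using i0a by simp
    qed
    note i0 = i0a(1) i0le
    let ?S1 = "S - {i0}"
    show ?thesis
    proof (cases "?S1 = {}")
      case True
      then have "S = {i0}" using i0 by auto
      then show ?thesis by (intro exI[of _ "{i0}"]) simp
    next
      case False
      have fS1: "finite ?S1" using less.prems(1) by auto
      have "Min (lo ` ?S1) \<in> lo ` ?S1" using fS1 False by (intro Min_in) auto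
      then obtain i1 where i1a: "i1 \<in> ?S1" "Min (lo ` ?S1) = lo i1"
        unfolding image_iff by blast
      have i1le: "\<forall>j\<in>?S1. lo i1 \<le> lo j"
      proof -
        have "\<forall>j\<in>?S1. Min (lo ` ?S1) \<le> lo j" using fS1 by simp
        then show ?thesis using i1a by simp
      qed
      note i1 = i1a(1) i1le
      let ?S2 = "?S1 - {i1}"
      have ca: "card S = Suc (card ?S1)" using card_Suc_Diff1[OF less.prems(1) i0(1)] by simp
      have cb: "card ?S1 = Suc (card ?S2)" using card_Suc_Diff1[OF fS1 i1(1)] by simp
      have c2: "card ?S2 + 2 = card S" using ca cb by simp
      have "card ?S2 < card S" using c2 by linarith
      then have "\<exists>Y\<subseteq>?S2. card ?S2 \<le> 2 * card Y \<and> (\<forall>i\<in>Y. \<forall>j\<in>Y. i \<noteq> j \<longrightarrow> L \<le> \<bar>x i - x j\<bar>)"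
      proof (rule less.hyps[of ?S2])
        show "finite ?S2" using fS1 by simp
        show "\<And>i. i \<in> ?S2 \<Longrightarrow> lo i < x i \<and> x i < hi i \<and> L < hi i - lo i"
          using less.prems(2) by blast
        show "\<And>i j. i \<in> ?S2 \<Longrightarrow> j \<in> ?S2 \<Longrightarrow> i \<noteq> j \<Longrightarrow> hi i \<le> lo j \<or> hi j \<le> lo i"
          using less.prems(3) by blast
      qed
      then obtain Y2 where Y2: "Y2 \<subseteq> ?S2" "card ?S2 \<le> 2 * card Y2"
         "\<forall>i\<in>Y2. \<forall>j\<in>Y2. i \<noteq> j \<longrightarrow> L \<le> \<bar>x i - x j\<bar>" by blast
      have i1S: "i1 \<in> S" "i1 \<noteq> i0" using i1 by auto
      have p0: "lo i0 < x i0 \<and> x i0 < hi i0 \<and> L < hi i0 - lo i0" using less.prems(2) i0(1) by blast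
      have p1: "lo i1 < x i1 \<and> x i1 < hi i1 \<and> L < hi i1 - lo i1" using less.prems(2) i1S(1) by blast
      have d01: "hi i0 \<le> lo i1 \<or> hi i1 \<le> lo i0" using less.prems(3) i0(1) i1S by blast
      have l01: "lo i0 \<le> lo i1" using i0(2) i1S(1) by blast
      have h01: "hi i0 \<le> lo i1" using d01 l01 p1 by (elim disjE) linarith+
      have far: "L \<le> \<bar>x i0 - x j\<bar>" if "j \<in> Y2" for j
      proof -
        have j: "j \<in> S" "j \<noteq> i0" "j \<noteq> i1" using that Y2(1) by auto
        have pj: "lo j < x j \<and> x j < hi j \<and> L < hi j - lo j" using less.prems(2) j(1) by blast
        have l1j: "lo i1 \<le> lo j" using i1(2) j by blast
        have d1j: "hi j \<le> lo i1 \<or> hi i1 \<le> lo j" using less.prems(3) j i1S(1) by blast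
        have "hi i1 \<le> lo j" using d1j l1j pj by (elim disjE) linarith+
        then have "L \<le> x j - x i0" using pj p1 p0 h01 by linarith
        then show ?thesis by linarith
      qed
      have fY2: "finite Y2" using Y2(1) fS1 finite_subset by blast
      have "i0 \<notin> Y2" using Y2(1) by auto
      then have cY: "card (insert i0 Y2) = Suc (card Y2)"
        using fY2 by simp
      have sub: "insert i0 Y2 \<subseteq> S" using Y2(1) i0(1) by blast
      have sep: "\<forall>i\<in>insert i0 Y2. \<forall>j\<in>insert i0 Y2. i \<noteq> j \<longrightarrow> L \<le> \<bar>x i - x j\<bar>"
      proof (intro ballI impI)
        fix i j assume ij: "i \<in> insert i0 Y2" "j \<in> insert i0 Y2" "i \<noteq> j"
        show "L \<le> \<bar>x i - x j\<bar>"
        proof (cases "i = i0")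
          case True
          then have "j \<in> Y2" using ij by auto
          then show ?thesis using far True by blast
        next
          case False
          then have i: "i \<in> Y2" using ij by auto
          show ?thesis
          proof (cases "j = i0")
            case True
            then show ?thesis using far[OF i] by (simp add: abs_minus_commute)
          next
            case False
            then have "j \<in> Y2" using ij by auto
            then show ?thesis using Y2(3) i ij(3) by blast
          qed
        qed
      qed
      have "card S \<le> 2 * card (insert i0 Y2)" using cY c2 Y2(2) by simp
      then show ?thesis using sub sep by blast
    qed
  qed
qed

lemma P_eps_mono:
  assumes "eps \<le> eps'" "Phi \<subseteq> Psi" "B \<subseteq> A"
  shows "P_eps Phi \<alpha> eps B \<le> P_eps Psi \<alpha> eps' A"
  unfolding P_eps_def
proof (rule SUP_mono)
  fix P assume "P \<in> {P. is_packing Phi eps B P}"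
  then have "is_packing Psi eps' A P" using assms unfolding is_packing_def by fastforce
  then show "\<exists>m\<in>{P. is_packing Psi eps' A P}. pack_sum \<alpha> P \<le> pack_sum \<alpha> m" by auto
qed

lemma P_zero_mono:
  assumes "Phi \<subseteq> Psi" "B \<subseteq> A"
  shows "P_zero Phi \<alpha> B \<le> P_zero Psi \<alpha> A"
  unfolding P_zero_def
  by (rule INF_mono) (use P_eps_mono[OF _ assms] in auto)

lemma P_meas_mono:
  assumes "Phi \<subseteq> Psi"
  shows "P_meas Phi \<alpha> E \<le> P_meas Psi \<alpha> E"
  unfolding P_meas_def
proof (rule INF_mono)
  fix A assume "A \<in> {A :: nat \<Rightarrow> real set. E \<subseteq> (\<Union>j. A j)}"
  then show "\<exists>m\<in>{A :: nat \<Rightarrow> real set. E \<subseteq> (\<Union>j. A j)}. (\<Sum>j. P_zero Phi \<alpha> (m j)) \<le> (\<Sum>j. P_zero Psi \<alpha> (A j))"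
    by (intro bexI[of _ A] suminf_le summableI) (auto intro: P_zero_mono[OF assms])
qed

lemma pack_sum_ge:
  assumes "finite F" "F \<subseteq> P"
  shows "ennreal (\<Sum>I\<in>F. diameter I powr \<alpha>) \<le> pack_sum \<alpha> P"
  unfolding pack_sum_def using assms by (intro SUP_upper) auto

lemma P_eps_ge:
  assumes "is_packing Phi eps A P"
  shows "pack_sum \<alpha> P \<le> P_eps Phi \<alpha> eps A"
  unfolding P_eps_def using assms by (intro SUP_upper) auto

lemma phi_pack_count:
  assumes Phi1: "Phi \<subseteq> open_intervals"
    and hyp: "\<forall>a b. 0 \<le> a \<and> a < b \<and> b \<le> 1 \<longrightarrow>
           (\<exists>D\<in>Phi. (a + b) / 2 \<in> D \<and> D \<subseteq> {a<..<b} \<and> (b - a) / diameter D \<le> C)"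
    and C: "C > 0" and al: "0 \<le> \<alpha>" and L: "L > 0" and fY: "finite Y"
    and xY: "\<forall>i\<in>Y. x i \<in> A \<and> L/2 \<le> x i \<and> x i \<le> 1 - L/2"
    and sep: "\<forall>i\<in>Y. \<forall>j\<in>Y. i \<noteq> j \<longrightarrow> L \<le> \<bar>x i - x j\<bar>"
  shows "ennreal (real (card Y) * (L/C) powr \<alpha>) \<le> P_eps Phi \<alpha> L A"
proof -
  have "\<forall>i\<in>Y. \<exists>D\<in>Phi. x i \<in> D \<and> D \<subseteq> {x i - L/2<..<x i + L/2} \<and> L / diameter D \<le> C"
  proof
    fix i assume i: "i \<in> Y"
    have "\<exists>D\<in>Phi. ((x i - L/2) + (x i + L/2)) / 2 \<in> D \<and> D \<subseteq> {x i - L/2<..<x i + L/2}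
          \<and> ((x i + L/2) - (x i - L/2)) / diameter D \<le> C"
      using hyp xY i L by (intro hyp[rule_format]) auto
    then show "\<exists>D\<in>Phi. x i \<in> D \<and> D \<subseteq> {x i - L/2<..<x i + L/2} \<and> L / diameter D \<le> C"
      by simp
  qed
  then obtain D where D: "\<forall>i\<in>Y. D i \<in> Phi \<and> x i \<in> D i \<and> D i \<subseteq> {x i - L/2<..<x i + L/2} \<and> L / diameter (D i) \<le> C"
    by metis
  have diam: "L/C \<le> diameter (D i) \<and> diameter (D i) \<le> L" if i: "i \<in> Y" for i
  proof -
    obtain a b where ab: "D i = {a<..<b}" "a < b" using D i Phi1 unfolding open_intervals_def by blast
    have dp: "diameter (D i) > 0" using ab by simp
    have "L \<le> C * diameter (D i)" using D i dp by (simp add: divide_le_eq mult.commute)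
    then have "L/C \<le> diameter (D i)" using C by (simp add: divide_le_eq mult.commute)
    moreover have "diameter (D i) \<le> diameter {x i - L/2<..<x i + L/2}"
      using D i by (intro diameter_subset) auto
    ultimately show ?thesis using L by (simp split: if_splits)
  qed
  have disj: "D i \<inter> D j = {}" if "i \<in> Y" "j \<in> Y" "i \<noteq> j" for i j
  proof -
    have "{x i - L/2<..<x i + L/2} \<inter> {x j - L/2<..<x j + L/2} = {}"
    proof -
      have "L \<le> \<bar>x i - x j\<bar>" using sep that by blast
      then show ?thesis by (auto simp: abs_if split: if_splits)
    qed
    then show ?thesis using D that by blast
  qed
  have inj: "inj_on D Y"
    unfolding inj_on_def using disj D by blast
  have pk: "is_packing Phi L A (D ` Y)"
    unfolding is_packing_def
  proof (intro conjI)
    show "countable (D ` Y)" using fY by (simp add: countable_finite)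
    show "D ` Y \<subseteq> Phi \<inter> open_intervals" using D Phi1 by auto
    show "disjoint (D ` Y)" unfolding disjoint_def using disj by auto
    show "\<forall>I\<in>D ` Y. diameter I \<le> L \<and> I \<inter> A \<noteq> {}" using diam D xY by blast
  qed
  have "real (card Y) * (L/C) powr \<alpha> = (\<Sum>i\<in>Y. (L/C) powr \<alpha>)" by simp
  also have "\<dots> \<le> (\<Sum>i\<in>Y. diameter (D i) powr \<alpha>)"
    using diam L C al by (intro sum_mono powr_mono2) auto
  also have "\<dots> = (\<Sum>I\<in>D ` Y. diameter I powr \<alpha>)"
    using inj by (simp add: sum.reindex)
  finally have "ennreal (real (card Y) * (L/C) powr \<alpha>) \<le> pack_sum \<alpha> (D ` Y)"
    using pack_sum_ge[of "D ` Y" "D ` Y" \<alpha>] fY by (meson ennreal_leI finite_imageI order_refl order_trans)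
  also have "\<dots> \<le> P_eps Phi \<alpha> L A" using P_eps_ge[OF pk] .
  finally show ?thesis .
qed

lemma boundary_count:
  fixes x :: "'a \<Rightarrow> real"
  assumes fY: "finite Y" and L: "L > 0"
    and x01: "\<forall>i\<in>Y. 0 \<le> x i \<and> x i \<le> 1"
    and sep: "\<forall>i\<in>Y. \<forall>j\<in>Y. i \<noteq> j \<longrightarrow> L \<le> \<bar>x i - x j\<bar>"
  shows "card Y \<le> card {i\<in>Y. L/2 \<le> x i \<and> x i \<le> 1 - L/2} + 2"
proof -
  let ?Y' = "{i\<in>Y. L/2 \<le> x i \<and> x i \<le> 1 - L/2}"
  let ?Ylo = "{i\<in>Y. x i < L/2}"
  let ?Yhi = "{i\<in>Y. 1 - L/2 < x i}"
  have "Y \<subseteq> ?Y' \<union> (?Ylo \<union> ?Yhi)" by auto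
  then have "card Y \<le> card (?Y' \<union> (?Ylo \<union> ?Yhi))" using fY by (intro card_mono) auto
  also have "\<dots> \<le> card ?Y' + card (?Ylo \<union> ?Yhi)" by (rule card_Un_le)
  also have "\<dots> \<le> card ?Y' + (card ?Ylo + card ?Yhi)" using card_Un_le by (intro add_left_mono) 
  also have "card ?Ylo \<le> 1"
  proof -
    have "\<forall>a1\<in>?Ylo. \<forall>a2\<in>?Ylo. a1 = a2"
    proof (intro ballI, rule ccontr)
      fix a1 a2 assume h: "a1 \<in> ?Ylo" "a2 \<in> ?Ylo" "a1 \<noteq> a2"
      then have "L \<le> \<bar>x a1 - x a2\<bar>" using sep by auto
      moreover have "\<bar>x a1 - x a2\<bar> < L" using h x01 by (auto simp: abs_if)
      ultimately show False by simp
    qed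
    then show ?thesis using card_le_Suc0_iff_eq[of ?Ylo] fY by auto
  qed
  also have "card ?Yhi \<le> 1"
  proof -
    have "\<forall>a1\<in>?Yhi. \<forall>a2\<in>?Yhi. a1 = a2"
    proof (intro ballI, rule ccontr)
      fix a1 a2 assume h: "a1 \<in> ?Yhi" "a2 \<in> ?Yhi" "a1 \<noteq> a2"
      then have "L \<le> \<bar>x a1 - x a2\<bar>" using sep by auto
      moreover have "\<bar>x a1 - x a2\<bar> < L" using h x01 by (auto simp: abs_if)
      ultimately show False by simp
    qed
    then show ?thesis using card_le_Suc0_iff_eq[of ?Yhi] fY by auto
  qed
  finally show ?thesis by simp
qed

lemma scale_count:
  assumes Phi1: "Phi \<subseteq> open_intervals"
    and hyp: "\<forall>a b. 0 \<le> a \<and> a < b \<and> b \<le> 1 \<longrightarrow>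
           (\<exists>D\<in>Phi. (a + b) / 2 \<in> D \<and> D \<subseteq> {a<..<b} \<and> (b - a) / diameter D \<le> C)"
    and C: "C > 0" and al: "0 \<le> \<alpha>" and L: "L > 0" and A01: "A \<subseteq> {0..1}"
    and fS: "finite S" and So: "S \<subseteq> open_intervals" and dS: "disjoint S"
    and SA: "\<forall>I\<in>S. I \<inter> A \<noteq> {} \<and> L < diameter I"
    and Q: "P_eps Phi \<alpha> L A \<le> ennreal Q" and Q0: "0 \<le> Q"
  shows "real (card S) \<le> 4 + 2 * Q / (L/C) powr \<alpha>"
proof -
  define lo where "lo I = Inf I" for I :: "real set"
  define hi where "hi I = Sup I" for I :: "real set"
  define x where "x I = (SOME z. z \<in> I \<inter> A)" for I
  have Iform: "I = {lo I<..<hi I} \<and> lo I < hi I" if IS: "I \<in> S" for I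
  proof -
    obtain a b where "I = {a<..<b}" "a < b" using So IS unfolding open_intervals_def by blast
    then show ?thesis by (simp add: lo_def hi_def)
  qed
  have xI: "x I \<in> I \<and> x I \<in> A" if "I \<in> S" for I
    using SA that unfolding x_def by (metis Int_iff ex_in_conv someI_ex)
  have c1: "lo I < x I \<and> x I < hi I \<and> L < hi I - lo I" if "I \<in> S" for I
    using Iform[OF that] xI[OF that] SA that by (metis diameter_open_interval greaterThanLessThan_iff not_less_iff_gr_or_eq)
  have c2: "hi I \<le> lo J \<or> hi J \<le> lo I" if "I \<in> S" "J \<in> S" "I \<noteq> J" for I J
  proof (rule ccontr)
    assume "\<not> (hi I \<le> lo J \<or> hi J \<le> lo I)"
    then have h: "lo J < hi I" "lo I < hi J" by auto
    let ?z = "(max (lo I) (lo J) + min (hi I) (hi J)) / 2"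
    have "?z \<in> {lo I<..<hi I}" "?z \<in> {lo J<..<hi J}" using Iform[OF that(1)] Iform[OF that(2)] h
      by (auto simp: max_def min_def)
    then have "?z \<in> I" "?z \<in> J" using Iform[OF that(1)] Iform[OF that(2)] by auto
    moreover have "I \<inter> J = {}" using dS that unfolding disjoint_def disjnt_def by auto
    ultimately show False by auto
  qed
  obtain Y where Y: "Y \<subseteq> S" "card S \<le> 2 * card Y" "\<forall>i\<in>Y. \<forall>j\<in>Y. i \<noteq> j \<longrightarrow> L \<le> \<bar>x i - x j\<bar>"
    using select_sep[of S lo x hi L] fS c1 c2 by blast
  have fY: "finite Y" using Y fS finite_subset by blast
  let ?Y' = "{i\<in>Y. L/2 \<le> x i \<and> x i \<le> 1 - L/2}"
  have b: "card Y \<le> card ?Y' + 2"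
  proof (rule boundary_count[OF fY L _ Y(3)])
    show "\<forall>i\<in>Y. 0 \<le> x i \<and> x i \<le> 1" using xI A01 Y(1) by fastforce
  qed
  have "ennreal (real (card ?Y') * (L/C) powr \<alpha>) \<le> P_eps Phi \<alpha> L A"
  proof (rule phi_pack_count[OF Phi1 hyp C al L])
    show "finite ?Y'" using fY by simp
    show "\<forall>i\<in>?Y'. x i \<in> A \<and> L / 2 \<le> x i \<and> x i \<le> 1 - L / 2" using xI Y(1) by blast
    show "\<forall>i\<in>?Y'. \<forall>j\<in>?Y'. i \<noteq> j \<longrightarrow> L \<le> \<bar>x i - x j\<bar>" using Y(3) by blast
  qed
  then have "real (card ?Y') * (L/C) powr \<alpha> \<le> Q"
    using order_trans[OF _ Q] ennreal_le_iff[OF Q0] by blast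
  then have "real (card ?Y') \<le> Q / (L/C) powr \<alpha>"
    using L C by (simp add: le_divide_eq)
  moreover have "real (card S) \<le> 2 * real (card ?Y') + 4" using b Y(2) by linarith
  moreover have "2 * Q / (L/C) powr \<alpha> = 2 * (Q / (L/C) powr \<alpha>)" by simp
  ultimately show ?thesis by linarith
qed

lemma scale_index:
  fixes d :: real
  assumes "0 < d" "d \<le> 2 powr (-real k0)"
  shows "k0 \<le> nat \<lfloor>-log 2 d\<rfloor> \<and> 2 powr (-(real (nat \<lfloor>-log 2 d\<rfloor>)+1)) < d
        \<and> d \<le> 2 powr (-real (nat \<lfloor>-log 2 d\<rfloor>))"
proof -
  define t where "t = -log 2 d"
  have dt: "d = 2 powr (-t)" unfolding t_def using assms by simp
  have "log 2 d \<le> log 2 (2 powr (-real k0))" using assms by (subst log_le_cancel_iff) auto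
  then have tk: "real k0 \<le> t" unfolding t_def by simp
  then have fl: "int k0 \<le> \<lfloor>t\<rfloor>" by (simp add: le_floor_iff)
  define m where "m = nat \<lfloor>t\<rfloor>"
  have rm: "real m = of_int \<lfloor>t\<rfloor>" unfolding m_def using fl by simp
  have m1: "real m \<le> t" "t < real m + 1" using rm by linarith+
  have "2 powr (-(real m + 1)) < 2 powr (-t)" using m1 by simp
  moreover have "2 powr (-t) \<le> 2 powr (-real m)" using m1 by simp
  moreover have "k0 \<le> m" unfolding m_def using fl by linarith
  ultimately show ?thesis unfolding m_def[symmetric] t_def[symmetric] using dt by simp
qed

lemma alg:
  fixes Q C \<alpha> \<beta> :: real and k :: nat
  assumes "C > 0"
  shows "(4 + 2 * Q / (2 powr (-(real k + 1)) / C) powr \<alpha>) * 2 powr (- real k * \<beta>)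
     = 4 * (2 powr (-\<beta>)) ^ k + (2 * Q * C powr \<alpha> * 2 powr \<alpha>) * (2 powr (\<alpha> - \<beta>)) ^ k"
proof -
  have e1: "(2 powr (-\<beta>)) ^ k = 2 powr (- real k * \<beta>)" by (simp add: powr_power)
  have e2: "(2 powr (\<alpha>-\<beta>)) ^ k = 2 powr (real k * (\<alpha> - \<beta>))" by (simp add: powr_power)
  have e3: "(2 powr (-(real k + 1)) / C) powr \<alpha> = 2 powr (-(real k + 1) * \<alpha>) / C powr \<alpha>"
    using assms by (simp add: powr_divide powr_powr)
  have e4: "2 powr (real k * (\<alpha> - \<beta>)) * 2 powr \<alpha> = 2 powr ((real k+1) * \<alpha>) * 2 powr (- real k * \<beta>)"
    by (simp add: powr_add[symmetric] algebra_simps)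
  show ?thesis unfolding e1 e2 e3 using assms
    apply (simp add: field_simps powr_minus)
    apply (simp add: powr_add[symmetric] algebra_simps)
    done
qed

lemma geo_bound:
  fixes q :: real
  assumes "0 \<le> q" "q < 1"
  shows "(\<Sum>k=k0..N. q ^ k) \<le> q ^ k0 / (1 - q)"
proof -
  have "(\<Sum>k=k0..N. q ^ k) = (if N < k0 then 0 else (q ^ k0 - q ^ Suc N) / (1 - q))"
    using assms by (simp add: sum_gp)
  also have "\<dots> \<le> q ^ k0 / (1 - q)"
    using assms by (auto simp: divide_right_mono)
  finally show ?thesis .
qed

lemma finite_bound:
  assumes Phi1: "Phi \<subseteq> open_intervals"
    and hyp: "\<forall>a b. 0 \<le> a \<and> a < b \<and> b \<le> 1 \<longrightarrow>
           (\<exists>D\<in>Phi. (a + b) / 2 \<in> D \<and> D \<subseteq> {a<..<b} \<and> (b - a) / diameter D \<le> C)"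
    and C: "C > 0" and al: "0 \<le> \<alpha>" and ab: "\<alpha> < \<beta>" and A01: "A \<subseteq> {0..1}"
    and Qb: "\<forall>L. 0 < L \<and> L \<le> 2 powr (-real k0) \<longrightarrow> P_eps Phi \<alpha> L A \<le> ennreal Q"
    and Q0: "0 \<le> Q"
    and pk: "is_packing open_intervals (2 powr (-real k0)) A P"
    and fF: "finite F" and FP: "F \<subseteq> P"
  shows "(\<Sum>I\<in>F. diameter I powr \<beta>) \<le> 4 * (2 powr (-\<beta>)) ^ k0 / (1 - 2 powr (-\<beta>))
     + (2 * Q * C powr \<alpha> * 2 powr \<alpha>) * (2 powr (\<alpha> - \<beta>)) ^ k0 / (1 - 2 powr (\<alpha> - \<beta>))"
proof -
  define kf where "kf I = nat \<lfloor>-log 2 (diameter I)\<rfloor>" for I :: "real set"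
  have Fo: "F \<subseteq> open_intervals"
    and FA: "\<forall>I\<in>F. diameter I \<le> 2 powr (-real k0) \<and> I \<inter> A \<noteq> {}"
    using pk FP unfolding is_packing_def by auto
  have dF: "disjoint F" using pk FP unfolding is_packing_def disjoint_def by blast
  have dpos: "0 < diameter I" if "I \<in> F" for I
    using Fo that unfolding open_intervals_def by auto
  have kfI: "k0 \<le> kf I \<and> 2 powr (-(real (kf I)+1)) < diameter I \<and> diameter I \<le> 2 powr (-real (kf I))"
    if "I \<in> F" for I
    unfolding kf_def using scale_index[OF dpos[OF that]] FA that by blast
  define N where "N = Max (insert k0 (kf ` F))"
  have kfN: "kf ` F \<subseteq> {k0..N}"
    unfolding N_def using kfI fF by auto
  define q1 where "q1 = 2 powr (-\<beta>)"
  define q2 where "q2 = 2 powr (\<alpha> - \<beta>)"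
  define c where "c = 2 * Q * C powr \<alpha> * 2 powr \<alpha>"
  have per: "(\<Sum>I\<in>{I\<in>F. kf I = k}. diameter I powr \<beta>) \<le> 4 * q1 ^ k + c * q2 ^ k" if k: "k \<in> {k0..N}" for k
  proof -
    let ?S = "{I\<in>F. kf I = k}"
    define L where "L = 2 powr (-(real k + 1))"
    have L0: "0 < L" unfolding L_def by simp
    have Lk: "L \<le> 2 powr (-real k0)" unfolding L_def using k by simp
    have "(\<Sum>I\<in>?S. diameter I powr \<beta>) \<le> (\<Sum>I\<in>?S. 2 powr (- real k * \<beta>))"
    proof (rule sum_mono)
      fix I assume I: "I \<in> ?S"
      have "diameter I powr \<beta> \<le> (2 powr (-real k)) powr \<beta>"
        using kfI[of I] I dpos[of I] al ab by (intro powr_mono2) auto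
      then show "diameter I powr \<beta> \<le> 2 powr (- real k * \<beta>)" by (simp add: powr_powr)
    qed
    also have "\<dots> = real (card ?S) * 2 powr (- real k * \<beta>)" by simp
    also have "\<dots> \<le> (4 + 2 * Q / (L/C) powr \<alpha>) * 2 powr (- real k * \<beta>)"
    proof (rule mult_right_mono)
      show "real (card ?S) \<le> 4 + 2 * Q / (L/C) powr \<alpha>"
      proof (rule scale_count[OF Phi1 hyp C al L0 A01])
        show "finite ?S" using fF by auto
        show "?S \<subseteq> open_intervals" using Fo by auto
        show "disjoint ?S" using dF unfolding disjoint_def by auto
        show "\<forall>I\<in>?S. I \<inter> A \<noteq> {} \<and> L < diameter I" using FA kfI unfolding L_def by auto
        show "P_eps Phi \<alpha> L A \<le> ennreal Q" using Qb L0 Lk by auto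
      qed (rule Q0)
    qed simp
    also have "\<dots> = 4 * q1 ^ k + c * q2 ^ k"
      unfolding L_def q1_def q2_def c_def by (rule alg[OF C])
    finally show ?thesis .
  qed
  have "(\<Sum>I\<in>F. diameter I powr \<beta>) = (\<Sum>k\<in>{k0..N}. \<Sum>I\<in>{I\<in>F. kf I = k}. diameter I powr \<beta>)"
    using sum.group[OF fF _ kfN, of "\<lambda>I. diameter I powr \<beta>"] by simp
  also have "\<dots> \<le> (\<Sum>k\<in>{k0..N}. 4 * q1 ^ k + c * q2 ^ k)"
    by (rule sum_mono) (rule per)
  also have "\<dots> = 4 * (\<Sum>k=k0..N. q1 ^ k) + c * (\<Sum>k=k0..N. q2 ^ k)"
    by (simp add: sum.distrib sum_distrib_left)
  also have "\<dots> \<le> 4 * (q1 ^ k0 / (1 - q1)) + c * (q2 ^ k0 / (1 - q2))"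
  proof (intro add_mono mult_left_mono geo_bound)
    show "0 \<le> c" unfolding c_def using Q0 by simp
    have "2 powr (-\<beta>) < 2 powr 0" using al ab by (subst powr_less_cancel_iff) auto
    then show "q1 < 1" unfolding q1_def by simp
    have "2 powr (\<alpha>-\<beta>) < 2 powr 0" using al ab by (subst powr_less_cancel_iff) auto
    then show "q2 < 1" unfolding q2_def by simp
  qed (auto simp: q1_def q2_def)
  finally show ?thesis unfolding q1_def q2_def c_def by simp
qed

lemma key:
  assumes Phi1: "Phi \<subseteq> open_intervals"
    and hyp: "\<forall>a b. 0 \<le> a \<and> a < b \<and> b \<le> 1 \<longrightarrow>
           (\<exists>D\<in>Phi. (a + b) / 2 \<in> D \<and> D \<subseteq> {a<..<b} \<and> (b - a) / diameter D \<le> C)"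
    and C: "C > 0" and al: "0 \<le> \<alpha>" and ab: "\<alpha> < \<beta>" and A01: "A \<subseteq> {0..1}"
    and fin: "P_zero Phi \<alpha> A < top"
  shows "P_zero open_intervals \<beta> A = 0"
proof -
  obtain e0 where e0: "0 < e0" "P_eps Phi \<alpha> e0 A < top"
    using fin unfolding P_zero_def by (auto simp: INF_less_iff)
  define Q where "Q = enn2real (P_eps Phi \<alpha> e0 A)"
  have Q0: "0 \<le> Q" unfolding Q_def by simp
  have hQ: "P_eps Phi \<alpha> e0 A = ennreal Q" unfolding Q_def using e0 by (simp add: ennreal_enn2real less_top)
  define q1 where "q1 = 2 powr (-\<beta>)"
  define q2 where "q2 = 2 powr (\<alpha> - \<beta>)"
  define c where "c = 2 * Q * C powr \<alpha> * 2 powr \<alpha>"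
  define B where "B k = 4 * q1 ^ k / (1 - q1) + c * q2 ^ k / (1 - q2)" for k :: nat
  have "2 powr (-\<beta>) < 2 powr 0" using al ab by (subst powr_less_cancel_iff) auto
  then have q1: "0 < q1" "q1 < 1" unfolding q1_def by simp_all
  have "2 powr (\<alpha>-\<beta>) < 2 powr 0" using al ab by (subst powr_less_cancel_iff) auto
  then have q2: "0 < q2" "q2 < 1" unfolding q2_def by simp_all
  have limB: "B \<longlonglongrightarrow> 0"
  proof -
    have "(\<lambda>k. 4 * q1 ^ k / (1 - q1) + c * q2 ^ k / (1 - q2)) \<longlonglongrightarrow> 4 * 0 / (1 - q1) + c * 0 / (1 - q2)"
      using q1 q2 by (intro tendsto_intros LIMSEQ_power_zero) auto
    then show ?thesis unfolding B_def by simp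
  qed
  have lim2: "(\<lambda>k::nat. 2 powr (-real k)) \<longlonglongrightarrow> 0"
  proof -
    have "(\<lambda>k::nat. (1/2::real) ^ k) \<longlonglongrightarrow> 0" by (intro LIMSEQ_power_zero) auto
    moreover have "2 powr (-real k) = (1/2::real) ^ k" for k :: nat
      by (simp add: powr_minus powr_realpow power_one_over inverse_eq_divide)
    ultimately show ?thesis by simp
  qed
  have "P_zero open_intervals \<beta> A \<le> 0"
  proof (rule ennreal_le_epsilon)
    fix e :: real assume e: "0 < e"
    have "eventually (\<lambda>k. B k < e) sequentially"
      using limB e by (simp add: order_tendsto_iff)
    moreover have "eventually (\<lambda>k. 2 powr (-real k) < e0) sequentially"
      using lim2 e0 by (simp add: order_tendsto_iff)
    ultimately have "eventually (\<lambda>k. B k < e \<and> 2 powr (-real k) < e0) sequentially"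
      by (rule eventually_conj)
    then obtain k where k: "B k < e" "2 powr (-real k) < e0"
      unfolding eventually_sequentially by blast
    have Qb: "\<forall>L. 0 < L \<and> L \<le> 2 powr (-real k) \<longrightarrow> P_eps Phi \<alpha> L A \<le> ennreal Q"
      using P_eps_mono[of _ e0 Phi Phi A A \<alpha>] k hQ by auto
    have "P_zero open_intervals \<beta> A \<le> P_eps open_intervals \<beta> (2 powr (-real k)) A"
      unfolding P_zero_def by (rule INF_lower) simp
    also have "\<dots> \<le> ennreal (B k)"
      unfolding P_eps_def
    proof (rule SUP_least)
      fix P assume "P \<in> {P. is_packing open_intervals (2 powr (-real k)) A P}"
      then have pk: "is_packing open_intervals (2 powr (-real k)) A P" by simp
      show "pack_sum \<beta> P \<le> ennreal (B k)"
        unfolding pack_sum_def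
      proof (rule SUP_least)
        fix F assume "F \<in> {F. finite F \<and> F \<subseteq> P}"
        then have F: "finite F" "F \<subseteq> P" by auto
        show "ennreal (\<Sum>I\<in>F. diameter I powr \<beta>) \<le> ennreal (B k)"
          using finite_bound[OF Phi1 hyp C al ab A01 Qb Q0 pk F]
          unfolding B_def q1_def q2_def c_def by (intro ennreal_leI) simp
      qed
    qed
    also have "\<dots> \<le> 0 + ennreal e" using k by (simp add: ennreal_leI)
    finally show "P_zero open_intervals \<beta> A \<le> 0 + ennreal e" .
  qed
  then show ?thesis by simp
qed

theorem theorem5:
  fixes Phi :: "real set set" and C :: real
  assumes "Phi \<subseteq> open_intervals"
    and "\<forall>I\<in>Phi. I \<subseteq> {0..1}"
    and "C > 0"
    and "\<forall>a b. 0 \<le> a \<and> a < b \<and> b \<le> 1 \<longrightarrow>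
           (\<exists>D\<in>Phi. (a + b) / 2 \<in> D \<and> D \<subseteq> {a<..<b} \<and> (b - a) / diameter D \<le> C)"
  shows "\<forall>E. E \<subseteq> {0..1} \<longrightarrow> dim_P Phi E = dim_P_unc E"
proof (intro allI impI)
  fix E :: "real set" assume E01: "E \<subseteq> {0..1}"
  define SP where "SP = {\<alpha>. 0 \<le> \<alpha> \<and> P_meas Phi \<alpha> E = 0}"
  define SU where "SU = {\<alpha>. 0 \<le> \<alpha> \<and> P_meas open_intervals \<alpha> E = 0}"
  have sub: "SU \<subseteq> SP"
  proof
    fix a assume "a \<in> SU"
    then have a: "0 \<le> a" "P_meas open_intervals a E = 0" by (simp_all add: SU_def)
    have "P_meas Phi a E \<le> P_meas open_intervals a E" by (rule P_meas_mono[OF assms(1)])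
    then show "a \<in> SP" using a by (simp add: SP_def)
  qed
  have up: "\<beta> \<in> SU" if "\<alpha> \<in> SP" "\<alpha> < \<beta>" for \<alpha> \<beta>
  proof -
    have al: "0 \<le> \<alpha>" and m0: "P_meas Phi \<alpha> E = 0" using that unfolding SP_def by auto
    have "(INF A\<in>{A :: nat \<Rightarrow> real set. E \<subseteq> (\<Union>j. A j)}. (\<Sum>j. P_zero Phi \<alpha> (A j))) < 1"
      using m0 unfolding P_meas_def by simp
    then obtain A where A: "E \<subseteq> (\<Union>j. A j)" "(\<Sum>j. P_zero Phi \<alpha> (A j)) < 1"
      unfolding INF_less_iff by blast
    define B where "B j = A j \<inter> {0..1}" for j
    have fin: "P_zero Phi \<alpha> (B j) < top" for j
    proof -
      have "P_zero Phi \<alpha> (B j) \<le> P_zero Phi \<alpha> (A j)"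
        unfolding B_def by (rule P_zero_mono) auto
      also have "\<dots> < 1" using ennreal_suminf_lessD[OF A(2)] .
      also have "(1::ennreal) < top" by simp
      finally show ?thesis .
    qed
    have z: "P_zero open_intervals \<beta> (B j) = 0" for j
      by (rule key[OF assms(1) assms(4) assms(3) al that(2) _ fin]) (simp add: B_def)
    have "E \<subseteq> (\<Union>j. B j)" using A(1) E01 unfolding B_def by auto
    then have "P_meas open_intervals \<beta> E \<le> (\<Sum>j. P_zero open_intervals \<beta> (B j))"
      unfolding P_meas_def by (intro INF_lower) simp
    then have "P_meas open_intervals \<beta> E = 0" using z by simp
    then show ?thesis unfolding SU_def using al that(2) by simp
  qed
  have bSP: "bdd_below SP" unfolding SP_def bdd_below_def by auto
  have bSU: "bdd_below SU" unfolding SU_def bdd_below_def by auto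
  have dP: "dim_P Phi E = Inf SP" and dU: "dim_P_unc E = Inf SU"
    by (simp_all add: dim_P_def dim_P_unc_def SP_def SU_def)
  show "dim_P Phi E = dim_P_unc E"
  proof (cases "SP = {}")
    case True
    then have "SU = {}" using sub by auto
    then show ?thesis using True unfolding dP dU by simp
  next
    case False
    then obtain \<alpha>0 where "\<alpha>0 \<in> SP" by auto
    then have neU: "SU \<noteq> {}" using up[of \<alpha>0 "\<alpha>0 + 1"] by auto
    have le1: "Inf SP \<le> Inf SU" by (rule cInf_superset_mono[OF neU bSP sub])
    have le2: "Inf SU \<le> Inf SP"
    proof (rule cInf_greatest[OF False])
      fix \<alpha> assume a: "\<alpha> \<in> SP"
      show "Inf SU \<le> \<alpha>"
      proof (rule field_le_epsilon)
        fix e :: real assume "0 < e"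
        then have "\<alpha> + e \<in> SU" using up[OF a] by simp
        then show "Inf SU \<le> \<alpha> + e" using bSU by (rule cInf_lower)
      qed
    qed
    show ?thesis using le1 le2 unfolding dP dU by simp
  qed
qed

end
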